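(* Let $S$ be a TBLS search with strict partial order $\prec_S$ on $P_f(\mathbb{N}^+)$, and let $G=(V,E)$ be a graph. An ordering $\sigma$ of $V$ is an $S$-ordering of $G$ if and only if for every $x,y\in V$ with $x<_\sigma y$ we have $N_\sigma(x,x)\not\prec_S N_\sigma(y,x)$.
   Context: Let $G=(V,E)$ be a finite (not necessarily connected) undirected graph with $n$ vertices; $N(v)$ denotes the set of neighbours of $v$. An ordering of $V$ is a bijection $\sigma:\{1,\dots,n\}\to V$; $\sigma(i)$ is the $i$th vertex and $x<_\sigma y$ means $\sigma^{-1}(x)<\sigma^{-1}(y)$. $P_f(\mathbb{N}^+)$ is the set of finite subsets of the positive integers. Given a strict partial order $\prec$ on $P_f(\mathbb{N}^+)$ and an ordering $\tau$ of $V$, the Tie-Breaking Label Search $\mathrm{TBLS}(G,\prec,\tau)$ is the procedure: set $label(v)=\emptyset$ for every $v$; for $i=1,\dots,n$: let Eligible be the set of unnumbered vertices $x$ such that there is no unnumbered vertex $y$ with $label(x)\prec label(y)$; let $v$ be the first vertex of Eligible in the ordering $\tau$; set $\sigma(i)=v$ ($v$ becomes numbered); for every unnumbered neighbour $w$ of $v$ replace $label(w)$ by $label(w)\cup\{i\}$. The output is $\sigma$. A TBLS search $S$ is specified by a strict partial order $\prec_S$ on $P_f(\mathbb{N}^+)$; an ordering $\sigma$ of $V$ is an $S$-ordering of $G$ if $\sigma=\mathrm{TBLS}(G,\prec_S,\tau)$ for some ordering $\tau$ of $V$. For vertices $u,v$ and an ordering $\sigma$, $N_\sigma(u,v)=\{i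 : \sigma(i)\in N(u)\text{ and }\sigma(i)<_\sigma v\}$. *)

theory Defs
  imports Main
begin

definition graph :: "'a set \<Rightarrow> ('a \<Rightarrow> 'a \<Rightarrow> bool) \<Rightarrow> bool" where
  "graph V E \<longleftrightarrow> finite V \<and> (\<forall>x y. E x y \<longrightarrow> x \<in> V \<and> y \<in> V)
     \<and> (\<forall>x y. E x y \<longrightarrow> E y x) \<and> (\<forall>x. \<not> E x x)"

text \<open>An ordering of V is represented as the list [sigma(1), ..., sigma(n)]
(a bijection {1..n} -> V).\<close>
definition is_ordering :: "'a set \<Rightarrow> 'a list \<Rightarrow> bool" where
  "is_ordering V \<sigma> \<longleftrightarrow> distinct \<sigma> \<and> set \<sigma> = V"

definition nth1 :: "'a list \<Rightarrow> nat \<Rightarrow> 'a" where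
  "nth1 \<sigma> i = \<sigma> ! (i - 1)"

definition before :: "'a list \<Rightarrow> 'a \<Rightarrow> 'a \<Rightarrow> bool" where
  "before \<sigma> x y \<longleftrightarrow> (\<exists>i j. 1 \<le> i \<and> i < j \<and> j \<le> length \<sigma> \<and> nth1 \<sigma> i = x \<and> nth1 \<sigma> j = y)"

definition Pf_pos :: "nat set set" where
  "Pf_pos = {A. finite A \<and> 0 \<notin> A}"

text \<open>A strict partial order on P_f(N+) (the relation is only relevant on P_f(N+)).\<close>
definition strict_po_Pf :: "(nat set \<Rightarrow> nat set \<Rightarrow> bool) \<Rightarrow> bool" where
  "strict_po_Pf prec \<longleftrightarrow>
     (\<forall>A\<in>Pf_pos. \<not> prec A A) \<and>
     (\<forall>A\<in>Pf_pos. \<forall>B\<in>Pf_pos. \<forall>C\<in>Pf_pos. prec A B \<longrightarrow> prec B C \<longrightarrow> prec A C)"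

text \<open>One iteration of TBLS. State: (numbered vertices in order, labels).\<close>
definition tbls_step :: "'a set \<Rightarrow> ('a \<Rightarrow> 'a \<Rightarrow> bool) \<Rightarrow> (nat set \<Rightarrow> nat set \<Rightarrow> bool)
    \<Rightarrow> 'a list \<Rightarrow> 'a list \<times> ('a \<Rightarrow> nat set) \<Rightarrow> 'a list \<times> ('a \<Rightarrow> nat set)" where
  "tbls_step V E prec \<tau> st =
     (let \<sigma> = fst st; label = snd st;
          unnum = V - set \<sigma>;
          eligible = {x \<in> unnum. \<not> (\<exists>y\<in>unnum. prec (label x) (label y))};
          v = hd (filter (\<lambda>x. x \<in> eligible) \<tau>);
          i = length \<sigma> + 1
      in (\<sigma> @ [v],
          (\<lambda>w. if w \<in> unnum - {v} \<and> E v w then label w \<union> {i} else label w)))"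

definition tbls :: "'a set \<Rightarrow> ('a \<Rightarrow> 'a \<Rightarrow> bool) \<Rightarrow> (nat set \<Rightarrow> nat set \<Rightarrow> bool)
    \<Rightarrow> 'a list \<Rightarrow> 'a list" where
  "tbls V E prec \<tau> = fst ((tbls_step V E prec \<tau> ^^ card V) ([], (\<lambda>_. {})))"

definition S_ordering :: "'a set \<Rightarrow> ('a \<Rightarrow> 'a \<Rightarrow> bool) \<Rightarrow> (nat set \<Rightarrow> nat set \<Rightarrow> bool)
    \<Rightarrow> 'a list \<Rightarrow> bool" where
  "S_ordering V E prec \<sigma> \<longleftrightarrow> (\<exists>\<tau>. is_ordering V \<tau> \<and> \<sigma> = tbls V E prec \<tau>)"

definition N_sigma :: "('a \<Rightarrow> 'a \<Rightarrow> bool) \<Rightarrow> 'a list \<Rightarrow> 'a \<Rightarrow> 'a \<Rightarrow> nat set" where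
  "N_sigma E \<sigma> u v = {i. 1 \<le> i \<and> i \<le> length \<sigma> \<and> E u (nth1 \<sigma> i) \<and> before \<sigma> (nth1 \<sigma> i) v}"

end

theory Submission
  imports Defs
begin

definition Lab :: "('a \<Rightarrow> 'a \<Rightarrow> bool) \<Rightarrow> 'a list \<Rightarrow> nat \<Rightarrow> 'a \<Rightarrow> nat set" where
  "Lab E s j w = {i. 1 \<le> i \<and> i \<le> j \<and> E w (s ! (i - 1))}"

lemma Lab_Pf: "Lab E s j w \<in> Pf_pos"
proof -
  have "Lab E s j w \<subseteq> {1..j}" by (auto simp: Lab_def)
  then show ?thesis unfolding Pf_pos_def by (auto intro: finite_subset)
qed

lemma Lab_append: "j \<le> length s \<Longrightarrow> Lab E (s @ t) j w = Lab E s j w"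
  by (auto simp: Lab_def nth_append)

lemma maximal_exists:
  assumes "finite U" "U \<noteq> {}" "strict_po_Pf prec"
  shows "\<exists>x\<in>U. \<not>(\<exists>y\<in>U. prec (Lab E s k x) (Lab E s k y))"
  using assms
proof (induction U rule: finite_ne_induct)
  case (singleton a) then show ?case using Lab_Pf[of E s k a] unfolding strict_po_Pf_def by blast
next
  case (insert a F)
  let ?l = "Lab E s k"
  from insert obtain x where x: "x\<in>F" "\<not>(\<exists>y\<in>F. prec (?l x) (?l y))" by auto
  have irr: "\<And>A. A \<in> Pf_pos \<Longrightarrow> \<not> prec A A" and tr: "\<And>A B C. A \<in> Pf_pos \<Longrightarrow> B \<in> Pf_pos \<Longrightarrow> C \<in> Pf_pos \<Longrightarrow> prec A B \<Longrightarrow> prec B C \<Longrightarrow> prec A C"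
    using insert.prems unfolding strict_po_Pf_def by blast+
  show ?case
  proof (cases "prec (?l x) (?l a)")
    case True
    have "\<not>(\<exists>y\<in>insert a F. prec (?l a) (?l y))"
    proof
      assume "\<exists>y\<in>insert a F. prec (?l a) (?l y)"
      then obtain y where y: "y \<in> insert a F" "prec (?l a) (?l y)" by blast
      have "prec (?l x) (?l y)" using tr[OF Lab_Pf Lab_Pf Lab_Pf True y(2)] .
      moreover have "y \<noteq> a" using y(2) irr[OF Lab_Pf[of E s k a]] by auto
      ultimately show False using x y(1) by auto
    qed
    then show ?thesis by blast
  next
    case False
    then show ?thesis using x by blast
  qed
qed

definition tinv :: "'a set \<Rightarrow> ('a \<Rightarrow> 'a \<Rightarrow> bool) \<Rightarrow> (nat set \<Rightarrow> nat set \<Rightarrow> bool) \<Rightarrow> nat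
   \<Rightarrow> 'a list \<times> ('a \<Rightarrow> nat set) \<Rightarrow> bool" where
  "tinv V E prec k st \<longleftrightarrow> length (fst st) = k \<and> distinct (fst st) \<and> set (fst st) \<subseteq> V \<and>
     (\<forall>w\<in>V - set (fst st). snd st w = Lab E (fst st) k w) \<and>
     (\<forall>j<k. \<forall>y\<in>V - set (take j (fst st)).
         \<not> prec (Lab E (fst st) j (fst st ! j)) (Lab E (fst st) j y))"

lemma step:
  assumes G: "graph V E" and P: "strict_po_Pf prec" and T: "is_ordering V \<tau>"
    and I: "tinv V E prec k st" and k: "k < card V"
  shows "tinv V E prec (Suc k) (tbls_step V E prec \<tau> st)"
proof -
  obtain s lab where st: "st = (s, lab)" by (cases st)
  define U where "U = V - set s"
  define El where "El = {x \<in> U. \<not> (\<exists>y\<in>U. prec (lab x) (lab y))}"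
  define v where "v = hd (filter (\<lambda>x. x \<in> El) \<tau>)"
  have ls: "length s = k" and ds: "distinct s" and sV: "set s \<subseteq> V"
    and labU: "\<And>w. w \<in> U \<Longrightarrow> lab w = Lab E s k w"
    and el: "\<And>j y. j < k \<Longrightarrow> y \<in> V - set (take j s) \<Longrightarrow> \<not> prec (Lab E s j (s ! j)) (Lab E s j y)"
    using I unfolding tinv_def st U_def by auto
  have fV: "finite V" using G by (simp add: graph_def)
  have "card (set s) = k" using distinct_card[OF ds] ls by simp
  then have "U \<noteq> {}" unfolding U_def using k sV card_mono[OF fV, of V]
    by (metis Diff_eq_empty_iff subset_antisym not_less)
  moreover have "finite U" using fV U_def by simp
  ultimately obtain x where "x \<in> U" "\<not>(\<exists>y\<in>U. prec (Lab E s k x) (Lab E s k y))"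
    using maximal_exists[OF _ _ P] by blast
  then have "x \<in> El" unfolding El_def using labU by auto
  moreover have "El \<subseteq> V" unfolding El_def U_def by auto
  ultimately have "filter (\<lambda>x. x \<in> El) \<tau> \<noteq> []" using T unfolding is_ordering_def
    by (metis (mono_tags, lifting) filter_empty_conv subsetD)
  then have "v \<in> set (filter (\<lambda>x. x \<in> El) \<tau>)" unfolding v_def by (rule hd_in_set)
  then have vEl: "v \<in> El" by simp
  then have vU: "v \<in> U" and vmax: "\<And>y. y \<in> U \<Longrightarrow> \<not> prec (lab v) (lab y)" unfolding El_def by auto
  have stp: "tbls_step V E prec \<tau> st = (s @ [v], (\<lambda>w. if w \<in> U - {v} \<and> E v w then lab w \<union> {Suc (length s)} else lab w))"
    by (simp add: tbls_step_def st U_def El_def v_def Let_def)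
  have symE: "\<And>a b. E a b \<Longrightarrow> E b a" using G by (simp add: graph_def)
  show ?thesis unfolding stp tinv_def fst_conv snd_conv
  proof (intro conjI ballI allI impI)
    show "length (s @ [v]) = Suc k" using ls by simp
    show "distinct (s @ [v])" using ds vU U_def by simp
    show "set (s @ [v]) \<subseteq> V" using sV vU U_def by auto
  next
    fix w assume w: "w \<in> V - set (s @ [v])"
    then have wU: "w \<in> U - {v}" unfolding U_def by auto
    have "Lab E (s @ [v]) (Suc k) w = Lab E s k w \<union> (if E v w then {Suc k} else {})"
    proof (rule set_eqI)
      fix i
      show "i \<in> Lab E (s @ [v]) (Suc k) w \<longleftrightarrow> i \<in> Lab E s k w \<union> (if E v w then {Suc k} else {})"
      proof (cases "i \<le> k")
        case True
        then show ?thesis using ls by (auto simp: Lab_def nth_append)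
      next
        case False
        then show ?thesis using ls symE by (auto simp: Lab_def nth_append)
      qed
    qed
    then show "(if w \<in> U - {v} \<and> E v w then lab w \<union> {Suc (length s)} else lab w) = Lab E (s @ [v]) (Suc k) w"
      using wU labU ls by auto
  next
    fix j y assume j: "j < Suc k" and y: "y \<in> V - set (take j (s @ [v]))"
    show "\<not> prec (Lab E (s @ [v]) j ((s @ [v]) ! j)) (Lab E (s @ [v]) j y)"
    proof (cases "j < k")
      case True
      have e1: "(s @ [v]) ! j = s ! j" using ls True by (simp add: nth_append)
      have e2: "\<And>w. Lab E (s @ [v]) j w = Lab E s j w" using ls True Lab_append[of j s E "[v]"] by simp
      have e3: "take j (s @ [v]) = take j s" using ls True by simp
      show ?thesis unfolding e1 e2 using el[OF True] y e3 by simp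
    next
      case False
      then have "j = k" using j by simp
      have yU: "y \<in> U" using y ls \<open>j = k\<close> unfolding U_def by simp
      have e1: "(s @ [v]) ! j = v" using ls \<open>j = k\<close> by (simp add: nth_append)
      have e2: "\<And>w. Lab E (s @ [v]) j w = Lab E s k w" using ls \<open>j = k\<close> Lab_append[of k s E "[v]"] by simp
      show ?thesis unfolding e1 e2 using vmax[OF yU] labU[OF yU] labU[OF vU] by simp
    qed
  qed
qed

lemma run_inv:
  assumes G: "graph V E" and P: "strict_po_Pf prec" and T: "is_ordering V \<tau>"
  shows "k \<le> card V \<Longrightarrow> tinv V E prec k ((tbls_step V E prec \<tau> ^^ k) ([], (\<lambda>_. {})))"
proof (induction k)
  case 0 then show ?case by (simp add: tinv_def Lab_def)
next
  case (Suc k) then show ?case using step[OF G P T] by simp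
qed

lemma before_idx:
  assumes "distinct s" "a < length s" "b < length s"
  shows "before s (s ! a) (s ! b) \<longleftrightarrow> a < b"
proof
  assume "before s (s ! a) (s ! b)"
  then obtain i j where ij: "1 \<le> i" "i < j" "j \<le> length s" "s ! (i - 1) = s ! a" "s ! (j - 1) = s ! b"
    unfolding before_def nth1_def by blast
  have "i - 1 < length s" "j - 1 < length s" using ij by auto
  then have "i - 1 = a" "j - 1 = b" using assms ij(4,5) nth_eq_iff_index_eq by blast+
  then show "a < b" using ij by simp
next
  assume "a < b" then show "before s (s ! a) (s ! b)" unfolding before_def nth1_def
    using assms by (rule_tac x="Suc a" in exI, rule_tac x="Suc b" in exI) auto
qed

lemma N_Lab:
  assumes "distinct s" "j < length s"
  shows "N_sigma E s u (s ! j) = Lab E s j u"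
proof -
  have "\<And>i. 1 \<le> i \<Longrightarrow> i \<le> length s \<Longrightarrow> before s (s ! (i - 1)) (s ! j) \<longleftrightarrow> i \<le> j"
    using before_idx[OF assms(1) _ assms(2)] by auto
  then show ?thesis using assms unfolding N_sigma_def Lab_def nth1_def
    by (intro set_eqI iffI) auto
qed

lemma take_notin:
  assumes "distinct s" "m < length s" shows "s ! m \<in> set (take j s) \<longleftrightarrow> m < j"
  using assms by (auto simp: in_set_conv_nth nth_eq_iff_index_eq)

lemma run_take:
  assumes G: "graph V E" and P: "strict_po_Pf prec" and O: "is_ordering V \<sigma>"
    and H: "\<forall>x\<in>V. \<forall>y\<in>V. before \<sigma> x y \<longrightarrow> \<not> prec (N_sigma E \<sigma> x x) (N_sigma E \<sigma> y x)"
  shows "k \<le> card V \<Longrightarrow> fst ((tbls_step V E prec \<sigma> ^^ k) ([], (\<lambda>_. {}))) = take k \<sigma>"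
proof (induction k)
  case 0 then show ?case by simp
next
  case (Suc k)
  define st where "st = (tbls_step V E prec \<sigma> ^^ k) ([], (\<lambda>_. {}))"
  obtain s lab where st2: "st = (s, lab)" by (cases st)
  have ds: "distinct \<sigma>" and sV: "set \<sigma> = V" using O by (auto simp: is_ordering_def)
  have lsig: "length \<sigma> = card V" using distinct_card[OF ds] sV by simp
  have "fst st = take k \<sigma>" using Suc st_def by simp
  then have s: "s = take k \<sigma>" using st2 by simp
  have I: "tinv V E prec k st" using run_inv[OF G P O] Suc st_def by simp
  have kl: "k < length \<sigma>" using Suc lsig by simp
  define U where "U = V - set s"
  define El where "El = {x \<in> U. \<not> (\<exists>y\<in>U. prec (lab x) (lab y))}"
  have labU: "\<And>w. w \<in> U \<Longrightarrow> lab w = Lab E \<sigma> k w"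
  proof -
    fix w assume "w \<in> U"
    then have "lab w = Lab E (take k \<sigma>) k w" using I unfolding tinv_def st2 U_def s by simp
    also have "\<dots> = Lab E (take k \<sigma> @ drop k \<sigma>) k w" using kl by (subst Lab_append) auto
    finally show "lab w = Lab E \<sigma> k w" by simp
  qed
  have irr: "\<And>A. A \<in> Pf_pos \<Longrightarrow> \<not> prec A A" using P unfolding strict_po_Pf_def by blast
  have xU: "\<sigma> ! k \<in> U" unfolding U_def s using take_notin[OF ds kl, of k] kl sV by auto
  have "\<sigma> ! k \<in> El"
  proof -
    have "\<not> prec (lab (\<sigma> ! k)) (lab y)" if y: "y \<in> U" for y
    proof (cases "y = \<sigma> ! k")
      case True then show ?thesis using irr[OF Lab_Pf[of E \<sigma> k y]] labU[OF y] by simp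
    next
      case False
      have "y \<in> set \<sigma>" using y sV unfolding U_def by auto
      then obtain m where m: "m < length \<sigma>" "y = \<sigma> ! m" by (metis in_set_conv_nth)
      have "\<not> m < k" using y m take_notin[OF ds m(1), of k] unfolding U_def s by auto
      then have "k < m" using False m by (cases "k = m") auto
      then have "before \<sigma> (\<sigma> ! k) y" using before_idx[OF ds kl m(1)] m by simp
      then have "\<not> prec (N_sigma E \<sigma> (\<sigma> ! k) (\<sigma> ! k)) (N_sigma E \<sigma> y (\<sigma> ! k))"
        using H xU y unfolding U_def by auto
      then show ?thesis using N_Lab[OF ds kl] labU xU y by simp
    qed
    then show ?thesis using xU unfolding El_def by blast
  qed
  have disj: "\<And>x. x \<in> set (take k \<sigma>) \<Longrightarrow> x \<notin> El" unfolding El_def U_def s by auto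
  have "filter (\<lambda>x. x \<in> El) \<sigma> = filter (\<lambda>x. x \<in> El) (take k \<sigma>) @ filter (\<lambda>x. x \<in> El) (drop k \<sigma>)"
    by (metis append_take_drop_id filter_append)
  also have "filter (\<lambda>x. x \<in> El) (take k \<sigma>) = []" using disj by (simp add: filter_empty_conv)
  also have "drop k \<sigma> = \<sigma> ! k # drop (Suc k) \<sigma>" using kl by (simp add: Cons_nth_drop_Suc)
  finally have hd: "hd (filter (\<lambda>x. x \<in> El) \<sigma>) = \<sigma> ! k" using \<open>\<sigma> ! k \<in> El\<close> by simp
  have "fst (tbls_step V E prec \<sigma> st) = s @ [hd (filter (\<lambda>x. x \<in> El) \<sigma>)]"
    by (simp add: tbls_step_def st2 U_def El_def Let_def)
  then show ?case using hd s kl st_def by (simp add: take_Suc_conv_app_nth)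
qed

theorem mainTheorem1:
  fixes V :: "'a set" and E :: "'a \<Rightarrow> 'a \<Rightarrow> bool"
    and prec :: "nat set \<Rightarrow> nat set \<Rightarrow> bool" and \<sigma> :: "'a list"
  assumes "graph V E" and "strict_po_Pf prec" and "is_ordering V \<sigma>"
  shows "S_ordering V E prec \<sigma> \<longleftrightarrow>
    (\<forall>x\<in>V. \<forall>y\<in>V. before \<sigma> x y \<longrightarrow> \<not> prec (N_sigma E \<sigma> x x) (N_sigma E \<sigma> y x))"
proof
  assume "S_ordering V E prec \<sigma>"
  then obtain \<tau> where T: "is_ordering V \<tau>" and sig: "\<sigma> = tbls V E prec \<tau>" unfolding S_ordering_def by blast
  have I: "tinv V E prec (card V) ((tbls_step V E prec \<tau> ^^ card V) ([], (\<lambda>_. {})))"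
    using run_inv[OF assms(1,2) T] by simp
  have fs: "fst ((tbls_step V E prec \<tau> ^^ card V) ([], (\<lambda>_. {}))) = \<sigma>" using sig by (simp add: tbls_def)
  have I2: "\<forall>j<card V. \<forall>y\<in>V - set (take j \<sigma>). \<not> prec (Lab E \<sigma> j (\<sigma> ! j)) (Lab E \<sigma> j y)"
    using I unfolding tinv_def fs by (elim conjE)
  have ds: "distinct \<sigma>" and sV: "set \<sigma> = V" using assms(3) by (auto simp: is_ordering_def)
  have lsig: "length \<sigma> = card V" using distinct_card[OF ds] sV by simp
  show "\<forall>x\<in>V. \<forall>y\<in>V. before \<sigma> x y \<longrightarrow> \<not> prec (N_sigma E \<sigma> x x) (N_sigma E \<sigma> y x)"
  proof (intro ballI impI)
    fix x y assume x: "x \<in> V" and y: "y \<in> V" and b: "before \<sigma> x y"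
    have "x \<in> set \<sigma>" "y \<in> set \<sigma>" using x y sV by auto
    then obtain a m where a: "a < length \<sigma>" "x = \<sigma> ! a" and m: "m < length \<sigma>" "y = \<sigma> ! m"
      by (metis in_set_conv_nth)
    have am: "a < m" using b a m before_idx[OF ds a(1) m(1)] by simp
    have "y \<notin> set (take a \<sigma>)" using take_notin[OF ds m(1), of a] m am by simp
    then have "\<not> prec (Lab E \<sigma> a (\<sigma> ! a)) (Lab E \<sigma> a y)" using I2 a lsig y by simp
    then show "\<not> prec (N_sigma E \<sigma> x x) (N_sigma E \<sigma> y x)" using N_Lab[OF ds a(1)] a by simp
  qed
next
  assume H: "\<forall>x\<in>V. \<forall>y\<in>V. before \<sigma> x y \<longrightarrow> \<not> prec (N_sigma E \<sigma> x x) (N_sigma E \<sigma> y x)"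
  have ds: "distinct \<sigma>" and sV: "set \<sigma> = V" using assms(3) by (auto simp: is_ordering_def)
  have lsig: "length \<sigma> = card V" using distinct_card[OF ds] sV by simp
  have "tbls V E prec \<sigma> = \<sigma>" unfolding tbls_def using run_take[OF assms H, of "card V"] lsig by simp
  then show "S_ordering V E prec \<sigma>" unfolding S_ordering_def using assms(3) by auto
qed

end
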